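(* Consider the family of single-server discrete-time queues described in the context, indexed by $\epsilon\in(0,\mu)$, satisfying the light-tail assumption. Let $\bar q^{(\epsilon)}$ be distributed according to the stationary distribution of $\{q^{(\epsilon)}(t)\}$ and let $Z^{(\epsilon)}$ be exponential with mean $\frac{(\sigma_a^{(\epsilon)})^2+\sigma_s^2}{2}$. Then there exist constants $C<\infty$ and $\epsilon_0\in(0,\mu)$, independent of $\epsilon$, such that for all $\epsilon\in(0,\epsilon_0]$, $$d_W\big(\epsilon\,\bar q^{(\epsilon)},\,Z^{(\epsilon)}\big)\le C\,\epsilon\log\frac1\epsilon .$$
   Context: Wasserstein distance: for real-valued random variables $X,Y$, $d_W(X,Y)=\sup_{h\in \mathrm{Lip}(1)}|\mathbb E[h(X)]-\mathbb E[h(Y)]|$, where $\mathrm{Lip}(1)$ is the set of functions $h:\mathbb R\to\mathbb R$ with $|h(x)-h(y)|\le|x-y|$. Single-server queue: time is slotted; $q(t+1)=q(t)+a(t)-s(t)+u(t)$ with $u(t)=\max(s(t)-a(t)-q(t),0)$. Arrivals $\{a(t)\}$ are i.i.d. nonnegative integer-valued, services $\{s(t)\}$ are i.i.d. nonnegative integer-valued, independent of each other and of past queue lengths. Service law is fixed with mean $\mu>0$ and variance $\sigma_s^2$; for each $\epsilon\in(0,\mu)$ the arrival law has mean $\mu-\epsilon$ and variance $(\sigma_a^{(\epsilon)})^2$, and there is $c_0>0$ with $(\sigma_a^{(\epsilon)})^2+\sigma_s^2\ge c_0$ for all $\epsilon$. Light-tail assumption: there are constants $\theta_1,\theta_2>0$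 and $D_1,D_2<\infty$, independent of $\epsilon$, with $\mathbb E[e^{\theta_1 a^{(\epsilon)}(t)}]\le D_1$ and $\mathbb E[e^{\theta_2 s(t)}]\le D_2$. For each $\epsilon$ the chain $\{q^{(\epsilon)}(t)\}$ is positive recurrent and its stationary distribution has finite moments of all orders. *)

theory Defs
  imports "HOL-Probability.Probability"
begin

text \<open>Taken in the extended reals so that an unbounded supremum is +infinity.\<close>
definition wasserstein :: "real measure \<Rightarrow> real measure \<Rightarrow> ereal" where
  "wasserstein M N =
     (SUP h \<in> {h :: real \<Rightarrow> real. \<forall>x y. \<bar>h x - h y\<bar> \<le> \<bar>x - y\<bar>}.
        ereal \<bar>(\<integral>x. h x \<partial>M) - (\<integral>x. h x \<partial>N)\<bar>)"

text \<open>One step of the queue: q(t+1) = q(t) + a(t) - s(t) + u(t) = max(q+a-s,0),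
  with a ~ arrival law, s ~ service law, independent of each other and of q.\<close>
definition queue_step :: "nat pmf \<Rightarrow> nat pmf \<Rightarrow> nat \<Rightarrow> nat pmf" where
  "queue_step Arr Srv q =
     bind_pmf Arr (\<lambda>a. map_pmf (\<lambda>s. nat (max (int q + int a - int s) 0)) Srv)"

definition stationary_queue :: "nat pmf \<Rightarrow> nat pmf \<Rightarrow> nat pmf \<Rightarrow> bool" where
  "stationary_queue Arr Srv P \<longleftrightarrow> bind_pmf P (queue_step Arr Srv) = P"

end

theory Submission
  imports Defs
begin


lemma taylor1:
  fixes f f1 :: "real \<Rightarrow> real" and L :: real
  assumes df: "\<And>x. (f has_real_derivative f1 x) (at x)"
    and lip: "\<And>x y. \<bar>f1 x - f1 y\<bar> \<le> L * \<bar>x - y\<bar>"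
  shows "\<bar>f (y + d) - f y - f1 y * d\<bar> \<le> L * d^2"
proof -
  define \<phi> where "\<phi> t = f (y + t) - f y - f1 y * t" for t
  have dphi: "(\<phi> has_real_derivative (f1 (y + t) - f1 y)) (at t)" for t
  proof -
    have "((\<lambda>t. f (t + y)) has_real_derivative f1 (t + y)) (at t)"
      using DERIV_shift[of f "f1 (t+y)" t y] df[of "t+y"] by simp
    then have "((\<lambda>t. f (y + t)) has_real_derivative f1 (y + t)) (at t)" by (simp add: add.commute)
    then show ?thesis unfolding \<phi>_def by (auto intro!: derivative_eq_intros)
  qed
  have "\<bar>f1 1 - f1 0\<bar> \<le> L" using lip[of 1 0] by simp
  then have "L \<ge> 0" by linarith
  show ?thesis
  proof (cases "d = 0")
    case True then show ?thesis by simp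
  next
    case False
    obtain z where z: "\<bar>z\<bar> \<le> \<bar>d\<bar>" "\<phi> d - \<phi> 0 = d * (f1 (y + z) - f1 y)"
    proof (cases "d > 0")
      case True
      from MVT2[OF True, of \<phi> "\<lambda>t. f1 (y + t) - f1 y"] dphi obtain z where "0 < z" "z < d" "\<phi> d - \<phi> 0 = (d - 0) * (f1 (y + z) - f1 y)" by blast
      then show ?thesis using that[of z] by auto
    next
      case False
      with \<open>d \<noteq> 0\<close> have "d < 0" by auto
      from MVT2[OF this, of \<phi> "\<lambda>t. f1 (y + t) - f1 y"] dphi obtain z where "d < z" "z < 0" "\<phi> 0 - \<phi> d = (0 - d) * (f1 (y + z) - f1 y)" by blast
      then show ?thesis using that[of z] by auto
    qed
    have "\<phi> 0 = 0" by (simp add: \<phi>_def)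
    have "\<bar>f1 (y + z) - f1 y\<bar> \<le> L * \<bar>z\<bar>" using lip[of "y+z" y] by simp
    also have "\<dots> \<le> L * \<bar>d\<bar>" using z(1) \<open>L \<ge> 0\<close> by (simp add: mult_left_mono)
    finally have "\<bar>\<phi> d\<bar> \<le> \<bar>d\<bar> * (L * \<bar>d\<bar>)" using z(2) \<open>\<phi> 0 = 0\<close> by (simp add: abs_mult mult_left_mono)
    then show ?thesis by (simp add: \<phi>_def power2_eq_square abs_mult_self mult.commute mult.left_commute abs_mult[symmetric])
  qed
qed

lemma taylor2:
  fixes G f f1 :: "real \<Rightarrow> real" and L :: real
  assumes dG: "\<And>x. (G has_real_derivative f x) (at x)"
    and df: "\<And>x. (f has_real_derivative f1 x) (at x)"
    and lip: "\<And>x y. \<bar>f1 x - f1 y\<bar> \<le> L * \<bar>x - y\<bar>"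
  shows "\<bar>G (y + d) - G y - f y * d - f1 y * d^2 / 2\<bar> \<le> L * \<bar>d\<bar>^3"
proof -
  define \<phi> where "\<phi> t = G (y + t) - G y - f y * t - f1 y * t^2 / 2" for t
  have dphi: "(\<phi> has_real_derivative (f (y + t) - f y - f1 y * t)) (at t)" for t
  proof -
    have "((\<lambda>t. G (t + y)) has_real_derivative f (t + y)) (at t)"
      using DERIV_shift[of G "f (t+y)" t y] dG[of "t+y"] by simp
    then have "((\<lambda>t. G (y + t)) has_real_derivative f (y + t)) (at t)" by (simp add: add.commute)
    then show ?thesis unfolding \<phi>_def by (auto intro!: derivative_eq_intros)
  qed
  have "\<bar>f1 1 - f1 0\<bar> \<le> L" using lip[of 1 0] by simp
  then have "L \<ge> 0" by linarith
  show ?thesis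
  proof (cases "d = 0")
    case True then show ?thesis by (simp add: \<phi>_def)
  next
    case False
    obtain z where z: "\<bar>z\<bar> \<le> \<bar>d\<bar>" "\<phi> d - \<phi> 0 = d * (f (y + z) - f y - f1 y * z)"
    proof (cases "d > 0")
      case True
      from MVT2[OF True, of \<phi> "\<lambda>t. f (y + t) - f y - f1 y * t"] dphi obtain z where "0 < z" "z < d" "\<phi> d - \<phi> 0 = (d - 0) * (f (y + z) - f y - f1 y * z)" by blast
      then show ?thesis using that[of z] by auto
    next
      case False
      with \<open>d \<noteq> 0\<close> have "d < 0" by auto
      from MVT2[OF this, of \<phi> "\<lambda>t. f (y + t) - f y - f1 y * t"] dphi obtain z where "d < z" "z < 0" "\<phi> 0 - \<phi> d = (0 - d) * (f (y + z) - f y - f1 y * z)" by blast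
      then show ?thesis using that[of z] by auto
    qed
    have "\<phi> 0 = 0" by (simp add: \<phi>_def)
    have "\<bar>f (y + z) - f y - f1 y * z\<bar> \<le> L * z^2" using taylor1[OF df lip] by simp
    also have "\<dots> \<le> L * d^2" using z(1) \<open>L \<ge> 0\<close>
      by (intro mult_left_mono) (auto simp: abs_le_square_iff)
    finally have "\<bar>\<phi> d\<bar> \<le> \<bar>d\<bar> * (L * d^2)" using z(2) \<open>\<phi> 0 = 0\<close> by (simp add: abs_mult mult_left_mono)
    then show ?thesis by (simp add: \<phi>_def power3_eq_cube power2_eq_square abs_mult mult_ac)
  qed
qed


locale stein =
  fixes l :: real and h :: "real \<Rightarrow> real"
  assumes l_pos: "0 < l" and lip: "\<And>x y. \<bar>h x - h y\<bar> \<le> \<bar>x - y\<bar>"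
begin

abbreviation "EXP \<equiv> density lborel (exponential_density l)"

definition I where "I x = (\<integral>z. h (x + z) \<partial>EXP)"
definition c where "c = (\<integral>z. h z \<partial>EXP)"
definition f where "f x = c - I x"
definition f1 where "f1 x = l * (f x + h x - c)"

lemma exp_prob: "prob_space EXP"
  using prob_space_exponential_density[OF l_pos] .

lemma h_cont: "continuous_on UNIV h"
  by (rule lipschitz_on_continuous_on[of 1]) (rule lipschitz_onI, auto simp: dist_real_def lip)

lemma h_meas[measurable]: "h \<in> borel_measurable borel"
  using h_cont by (rule borel_measurable_continuous_onI)

lemma AE_nonneg: "AE z in EXP. 0 \<le> z"
  by (subst AE_density) (auto simp: exponential_density_def)

lemma distr_EXP: "distributed EXP lborel (\<lambda>x. x) (exponential_density l)"
  unfolding distributed_def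
  by (auto simp: distr_id2 exponential_density_nonneg[OF l_pos] intro: measurable_ident_sets)

lemma int_z: "integrable EXP (\<lambda>z. z)" and int_z_val: "(\<integral>z. z \<partial>EXP) = 1 / l"
proof -
  interpret prob_space EXP by (rule exp_prob)
  have "has_bochner_integral EXP (\<lambda>x. x ^ 1) (fact (0 + 1) / (fact 0 * l ^ 1))"
    by (rule has_bochner_integral_erlang_ith_moment[OF l_pos distr_EXP])
  then have hb: "has_bochner_integral EXP (\<lambda>x. x) (1 / l)" by simp
  from hb show "integrable EXP (\<lambda>z. z)" by (rule integrable.intros)
  from hb show "(\<integral>z. z \<partial>EXP) = 1 / l" by (rule has_bochner_integral_integral_eq)
qed

lemma meas_EXP: "g \<in> borel_measurable borel \<Longrightarrow> g \<in> borel_measurable EXP"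
  by (simp add: measurable_cong_sets[OF sets_density refl])

lemma int_h: "integrable EXP (\<lambda>z. h (x + z))"
proof -
  interpret prob_space EXP by (rule exp_prob)
  have i: "integrable EXP (\<lambda>z. \<bar>h 0\<bar> + \<bar>x\<bar> + \<bar>z\<bar>)"
    using int_z by auto
  have b: "\<bar>h (x + z)\<bar> \<le> \<bar>h 0\<bar> + \<bar>x\<bar> + \<bar>z\<bar>" for z
    using lip[of "x+z" 0] by auto
  show ?thesis
  proof (rule Bochner_Integration.integrable_bound[OF i])
    show "(\<lambda>z. h (x + z)) \<in> borel_measurable EXP" by (rule meas_EXP) measurable
  qed (auto intro!: AE_I2 simp: b)
qed

lemma I_lip: "\<bar>I x - I y\<bar> \<le> \<bar>x - y\<bar>"
proof -
  interpret prob_space EXP by (rule exp_prob)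
  have sp: "measure EXP UNIV = 1" using prob_space by simp
  have hz: "\<bar>h (x + z) - h (y + z)\<bar> \<le> \<bar>x - y\<bar>" for z using lip[of "x+z" "y+z"] by simp
  have "I x - I y = (\<integral>z. h (x + z) - h (y + z) \<partial>EXP)"
    unfolding I_def using int_h by simp
  also have "\<bar>\<dots>\<bar> \<le> (\<integral>z. \<bar>x - y\<bar> \<partial>EXP)"
    by (rule integral_abs_bound_integral) (auto intro!: int_h simp: hz)
  also have "\<dots> = \<bar>x - y\<bar>" by (simp add: sp)
  finally show ?thesis .
qed

lemma f0: "f 0 = 0"
  by (simp add: f_def I_def c_def)

lemma f_lip: "\<bar>f x - f y\<bar> \<le> \<bar>x - y\<bar>"
  using I_lip[of y x] by (simp add: f_def abs_minus_commute)

lemma f1_alt: "f1 x = l * (h x - I x)"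
  by (simp add: f1_def f_def)

lemma f1_bound: "\<bar>f1 x\<bar> \<le> 1"
proof -
  interpret prob_space EXP by (rule exp_prob)
  have sp: "measure EXP UNIV = 1" using prob_space by simp
  have hz: "\<bar>h x - h (x + z)\<bar> \<le> \<bar>z\<bar>" for z using lip[of "x" "x+z"] by simp
  have "h x - I x = (\<integral>z. h x - h (x + z) \<partial>EXP)"
    unfolding I_def using int_h by (simp add: sp)
  also have "\<bar>\<dots>\<bar> \<le> (\<integral>z. \<bar>z\<bar> \<partial>EXP)"
    by (rule integral_abs_bound_integral) (auto intro!: int_h int_z simp: hz)
  also have "(\<integral>z. \<bar>z\<bar> \<partial>EXP) = (\<integral>z. z \<partial>EXP)"
    by (rule integral_cong_AE) (use AE_nonneg in auto)
  finally have "\<bar>h x - I x\<bar> \<le> 1 / l" using int_z_val by simp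
  then have "l * \<bar>h x - I x\<bar> \<le> l * (1 / l)" using l_pos by (intro mult_left_mono) auto
  then show ?thesis using l_pos by (simp add: f1_alt abs_mult)
qed

lemma f1_lip: "\<bar>f1 x - f1 y\<bar> \<le> 2 * l * \<bar>x - y\<bar>"
proof -
  have "f1 x - f1 y = l * ((f x - f y) + (h x - h y))" by (simp add: f1_def algebra_simps)
  also have "\<bar>\<dots>\<bar> = l * \<bar>(f x - f y) + (h x - h y)\<bar>" using l_pos by (simp add: abs_mult)
  also have "\<dots> \<le> l * (\<bar>x - y\<bar> + \<bar>x - y\<bar>)"
    using f_lip[of x y] lip[of x y] l_pos abs_triangle_ineq[of "f x - f y" "h x - h y"]
    by (intro mult_left_mono) auto
  finally show ?thesis by simp
qed


definition psi where "psi y = h y * exp (- l * y)"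
definition T where "T x = (LBINT y=ereal x..\<infinity>. psi y)"

lemma psi_cont: "continuous_on UNIV psi"
  unfolding psi_def by (intro continuous_intros h_cont)

lemma psi_meas[measurable]: "psi \<in> borel_measurable borel"
  using psi_cont by (rule borel_measurable_continuous_onI)

lemma I_repr_aux:
  shows "I x = l * exp (l * x) * (\<integral>y. indicator {x..} y * psi y \<partial>lborel)"
    and "integrable lborel (\<lambda>y. indicator {x..} y * psi y)"
proof -
  have 1: "I x = (\<integral>z. exponential_density l z * h (x + z) \<partial>lborel)"
    unfolding I_def by (subst integral_density) (auto simp: exponential_density_nonneg[OF l_pos])
  have i1: "integrable lborel (\<lambda>z. exponential_density l z * h (x + z))"
    using int_h[of x] by (subst (asm) integrable_density) (auto simp: exponential_density_nonneg[OF l_pos])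
  define k where "k y = exponential_density l (y - x) * h y" for y
  have kx: "k (x + z) = exponential_density l z * h (x + z)" for z by (simp add: k_def)
  have 2: "(\<integral>y. k y \<partial>lborel) = (\<integral>z. exponential_density l z * h (x + z) \<partial>lborel)"
    using lborel_integral_real_affine[of 1 k x] by (simp add: kx)
  have ik: "integrable lborel k"
    using lborel_integrable_real_affine_iff[of 1 k x] i1 by (simp add: kx)
  have 3: "k y = l * exp (l * x) * (indicator {x..} y * psi y)" for y
  proof (cases "y < x")
    case True then show ?thesis by (simp add: k_def exponential_density_def)
  next
    case False
    have "exp (- (y - x) * l) = exp (l * x) * exp (- l * y)"
      by (subst exp_add[symmetric]) (simp add: algebra_simps)
    with False show ?thesis by (simp add: k_def exponential_density_def psi_def)
  qed
  have "I x = (\<integral>y. l * exp (l * x) * (indicator {x..} y * psi y) \<partial>lborel)"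
    using 1 2 3 by simp
  then show "I x = l * exp (l * x) * (\<integral>y. indicator {x..} y * psi y \<partial>lborel)" by simp
  have "integrable lborel (\<lambda>y. (1 / (l * exp (l * x))) * k y)"
    using ik by (rule integrable_mult_right)
  moreover have "(1 / (l * exp (l * x))) * k y = indicator {x..} y * psi y" for y
    using l_pos by (simp add: 3)
  ultimately show "integrable lborel (\<lambda>y. indicator {x..} y * psi y)" by simp
qed

lemma psi_set_int: "set_integrable lborel {x<..} psi"
proof -
  have s1: "set_integrable lborel {x..} psi"
    unfolding set_integrable_def using I_repr_aux(2)[of x] by simp
  have s2: "{x<..} \<subseteq> {x..}" by auto
  show ?thesis by (rule set_integrable_subset[OF s1 _ s2]) simp
qed

lemma I_repr: "I x = l * exp (l * x) * T x"
proof -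
  have va: "indicator {x..} y * psi y = indicator {x<..} y *\<^sub>R psi y" if "y \<noteq> x" for y
    using that by (auto simp: indicator_def)
  have ae: "AE y in lborel. indicator {x..} y * psi y = indicator {x<..} y *\<^sub>R psi y"
    by (rule eventually_mono[OF AE_lborel_singleton[of x]]) (rule va)
  have m1: "(\<lambda>y. indicator {x..} y * psi y) \<in> borel_measurable lborel" by measurable
  have m2: "(\<lambda>y. indicator {x<..} y *\<^sub>R psi y) \<in> borel_measurable lborel" by measurable
  have e: "(\<integral>y. indicator {x..} y * psi y \<partial>lborel) = (\<integral>y. indicator {x<..} y *\<^sub>R psi y \<partial>lborel)"
    by (rule integral_cong_AE[OF m1 m2 ae])
  have Tx0: "T x = (\<integral>y. indicator {x<..} y *\<^sub>R psi y \<partial>lborel)"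
    unfolding T_def interval_integral_to_infinity_eq set_lebesgue_integral_def ..
  have Tx: "T x = (\<integral>y. indicator {x..} y * psi y \<partial>lborel)"
    using Tx0 e by (rule trans[OF _ sym])
  show ?thesis unfolding Tx by (rule I_repr_aux(1))
qed

lemma T_deriv: "(T has_real_derivative - psi x) (at x)"
proof -
  define a where "a = x - 1"
  define b where "b = x + 1"
  have Teq: "T u = T a - (LBINT y=ereal a..ereal u. psi y)" if "a \<le> u" for u
  proof -
    have "(LBINT y=ereal a..ereal u. psi y) + (LBINT y=ereal u..\<infinity>. psi y) = (LBINT y=ereal a..\<infinity>. psi y)"
    proof (rule interval_integral_sum)
      have "min (ereal a) (min (ereal u) \<infinity>) = ereal a" "max (ereal a) (max (ereal u) \<infinity>) = \<infinity>"
        using that by auto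
      then show "interval_lebesgue_integrable lborel (min (ereal a) (min (ereal u) \<infinity>)) (max (ereal a) (max (ereal u) \<infinity>)) psi"
        using psi_set_int[of a] by (simp add: interval_integrable_to_infinity_eq)
    qed
    then show ?thesis by (simp add: T_def)
  qed
  have "((\<lambda>u. LBINT y=ereal a..ereal u. psi y) has_vector_derivative psi x) (at x within {a..b})"
    by (rule interval_integral_FTC2) (auto simp: a_def b_def intro: continuous_on_subset[OF psi_cont])
  then have "((\<lambda>u. LBINT y=ereal a..ereal u. psi y) has_vector_derivative psi x) (at x within {a<..<b})"
    by (rule has_vector_derivative_within_subset) auto
  then have "((\<lambda>u. LBINT y=ereal a..ereal u. psi y) has_vector_derivative psi x) (at x)"
    by (subst (asm) has_vector_derivative_within_open) (auto simp: a_def b_def)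
  then have d: "((\<lambda>u. LBINT y=ereal a..ereal u. psi y) has_real_derivative psi x) (at x)"
    by (simp add: has_real_derivative_iff_has_vector_derivative)
  have d2: "((\<lambda>u. T a - (LBINT y=ereal a..ereal u. psi y)) has_real_derivative - psi x) (at x)"
    using d by (auto intro!: derivative_eq_intros)
  have eqT: "T a - (LBINT y=ereal a..ereal u. psi y) = T u" if "u \<in> {a<..<b}" for u
  proof -
    from that have "a \<le> u" by auto
    from Teq[OF this] show ?thesis by simp
  qed
  show ?thesis
  proof -
    have xin: "x \<in> {a<..<b}" unfolding a_def b_def by simp
    show ?thesis by (rule has_field_derivative_transform_within_open[OF d2 open_greaterThanLessThan xin eqT])
  qed
qed

lemma f_deriv: "(f has_real_derivative f1 x) (at x)"
proof -
  have feq: "f = (\<lambda>u. c - l * exp (l * u) * T u)"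
    by (auto simp: f_def I_repr)
  have "((\<lambda>u. c - l * exp (l * u) * T u) has_real_derivative
          - (l * (exp (l * x) * (l * 1)) * T x + l * exp (l * x) * (- psi x))) (at x)"
    by (auto intro!: derivative_eq_intros T_deriv)
  moreover have "- (l * (exp (l * x) * (l * 1)) * T x + l * exp (l * x) * (- psi x)) = f1 x"
  proof -
    have "exp (l * x) * psi x = h x"
      by (simp add: psi_def mult.assoc exp_add[symmetric])
    then show ?thesis by (simp add: f1_alt I_repr algebra_simps)
  qed
  ultimately show ?thesis by (simp add: feq)
qed

lemma G_exists: "\<exists>G. \<forall>x. (G has_real_derivative f x) (at x)"
proof -
  have fc: "continuous_on UNIV f"
    by (rule lipschitz_on_continuous_on[of 1]) (rule lipschitz_onI, auto simp: dist_real_def f_lip)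
  have "\<exists>F. \<forall>x::real. -\<infinity> < ereal x \<longrightarrow> ereal x < \<infinity> \<longrightarrow> (F has_vector_derivative f x) (at x)"
    by (rule einterval_antiderivative) (use fc in \<open>auto simp: continuous_on_eq_continuous_at\<close>)
  then show ?thesis by (auto simp: has_real_derivative_iff_has_vector_derivative)
qed

end


lemma pmf_meas[simp]: "g \<in> borel_measurable (measure_pmf M)"
  by simp

lemma bind_nn_aux:
  fixes g :: "'b \<Rightarrow> real"
  assumes nn: "\<And>y. 0 \<le> g y" and int: "integrable (measure_pmf (bind_pmf M N)) g"
  shows "(\<integral>y. g y \<partial>bind_pmf M N) = (\<integral>x. (\<integral>y. g y \<partial>N x) \<partial>M)"
    and "integrable (measure_pmf M) (\<lambda>x. \<integral>y. g y \<partial>N x)"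
    and "AE x in M. integrable (measure_pmf (N x)) g"
proof -
  define J where "J x = (\<integral>\<^sup>+y. ennreal (g y) \<partial>N x)" for x
  have fin: "(\<integral>\<^sup>+y. ennreal (g y) \<partial>bind_pmf M N) < \<infinity>"
    using int nn by (simp add: integrable_iff_bounded)
  then have fin2: "(\<integral>\<^sup>+x. J x \<partial>M) < \<infinity>" by (simp add: J_def)
  have aeJ: "AE x in M. J x \<noteq> \<infinity>"
    using fin2 by (intro nn_integral_PInf_AE) auto
  have inner: "(\<integral>y. g y \<partial>N x) = enn2real (J x)" for x
    unfolding J_def by (rule integral_eq_nn_integral) (auto simp: nn)
  have cong: "(\<integral>\<^sup>+x. ennreal (enn2real (J x)) \<partial>M) = (\<integral>\<^sup>+x. J x \<partial>M)"
    by (rule nn_integral_cong_AE) (use aeJ in \<open>auto simp: ennreal_enn2real_if\<close>)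
  have "(\<integral>y. g y \<partial>bind_pmf M N) = enn2real (\<integral>\<^sup>+y. ennreal (g y) \<partial>bind_pmf M N)"
    by (rule integral_eq_nn_integral) (auto simp: nn)
  also have "\<dots> = enn2real (\<integral>\<^sup>+x. J x \<partial>M)" by (simp add: J_def)
  also have "\<dots> = enn2real (\<integral>\<^sup>+x. ennreal (enn2real (J x)) \<partial>M)" by (simp add: cong)
  also have "\<dots> = (\<integral>x. enn2real (J x) \<partial>M)"
    by (rule integral_eq_nn_integral[symmetric]) auto
  finally show "(\<integral>y. g y \<partial>bind_pmf M N) = (\<integral>x. (\<integral>y. g y \<partial>N x) \<partial>M)"
    by (simp add: inner)
  show "integrable (measure_pmf M) (\<lambda>x. \<integral>y. g y \<partial>N x)"
    unfolding inner by (rule integrableI_bounded) (use fin2 cong in auto)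
  show "AE x in M. integrable (measure_pmf (N x)) g"
    using aeJ
  proof eventually_elim
    case (elim x)
    then show ?case unfolding J_def using nn
      by (intro integrableI_bounded) (auto simp: less_top)
  qed
qed

lemma bind_pmf_integral:
  fixes g :: "'b \<Rightarrow> real"
  assumes int: "integrable (measure_pmf (bind_pmf M N)) g"
  shows "(\<integral>y. g y \<partial>bind_pmf M N) = (\<integral>x. (\<integral>y. g y \<partial>N x) \<partial>M)"
    and "integrable (measure_pmf M) (\<lambda>x. \<integral>y. g y \<partial>N x)"
    and "AE x in M. integrable (measure_pmf (N x)) g"
proof -
  define gp where "gp y = max (g y) 0" for y
  define gm where "gm y = max (- g y) 0" for y
  have gpm: "g y = gp y - gm y" for y by (simp add: gp_def gm_def)
  have ip: "integrable (measure_pmf (bind_pmf M N)) gp"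
    unfolding gp_def by (intro integrable_max int) auto
  have im: "integrable (measure_pmf (bind_pmf M N)) gm"
    unfolding gm_def by (intro integrable_max int integrable_minus) auto
  note P = bind_nn_aux[of gp M N, OF _ ip] and Mi = bind_nn_aux[of gm M N, OF _ im]
  have nnp: "\<And>y. 0 \<le> gp y" and nnm: "\<And>y. 0 \<le> gm y" by (auto simp: gp_def gm_def)
  have ae: "AE x in M. integrable (measure_pmf (N x)) gp \<and> integrable (measure_pmf (N x)) gm"
    using P(3)[OF nnp] Mi(3)[OF nnm] by eventually_elim auto
  have ae2: "AE x in M. (\<integral>y. g y \<partial>N x) = (\<integral>y. gp y \<partial>N x) - (\<integral>y. gm y \<partial>N x)"
    using ae by eventually_elim (simp add: gpm[abs_def])
  have "(\<integral>y. g y \<partial>bind_pmf M N) = (\<integral>y. gp y \<partial>bind_pmf M N) - (\<integral>y. gm y \<partial>bind_pmf M N)"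
    using ip im by (simp add: gpm[abs_def])
  also have "\<dots> = (\<integral>x. (\<integral>y. gp y \<partial>N x) \<partial>M) - (\<integral>x. (\<integral>y. gm y \<partial>N x) \<partial>M)"
    using P(1)[OF nnp] Mi(1)[OF nnm] by simp
  also have "\<dots> = (\<integral>x. (\<integral>y. gp y \<partial>N x) - (\<integral>y. gm y \<partial>N x) \<partial>M)"
    using P(2)[OF nnp] Mi(2)[OF nnm] by simp
  also have "\<dots> = (\<integral>x. (\<integral>y. g y \<partial>N x) \<partial>M)"
    by (rule integral_cong_AE) (use ae2 in \<open>auto elim: eventually_mono\<close>)
  finally show "(\<integral>y. g y \<partial>bind_pmf M N) = (\<integral>x. (\<integral>y. g y \<partial>N x) \<partial>M)" .
  have "integrable (measure_pmf M) (\<lambda>x. (\<integral>y. gp y \<partial>N x) - (\<integral>y. gm y \<partial>N x))"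
    using P(2)[OF nnp] Mi(2)[OF nnm] by simp
  then show "integrable (measure_pmf M) (\<lambda>x. \<integral>y. g y \<partial>N x)"
    by (rule integrable_cong_AE_imp) (use ae2 in \<open>auto elim: eventually_mono\<close>)
  show "AE x in M. integrable (measure_pmf (N x)) g"
    using ae by eventually_elim (auto simp: gpm[abs_def])
qed


lemma pmf_integrable_bound:
  fixes g :: "'a \<Rightarrow> real"
  assumes "integrable (measure_pmf M) b" "\<And>x. \<bar>g x\<bar> \<le> b x"
  shows "integrable (measure_pmf M) g"
  using assms(1) by (rule Bochner_Integration.integrable_bound) (auto intro!: AE_I2 intro: order_trans[OF assms(2)])

lemma pmf_integrable_const_bound:
  fixes g :: "'a \<Rightarrow> real"
  assumes "\<And>x. \<bar>g x\<bar> \<le> B"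
  shows "integrable (measure_pmf M) g"
  by (rule measure_pmf.integrable_const_bound[where B=B]) (auto intro!: AE_I2 assms)

lemma pmf_abs_bound:
  fixes f g :: "'a \<Rightarrow> real"
  assumes "integrable (measure_pmf M) f" "integrable (measure_pmf M) g" "\<And>x. \<bar>f x\<bar> \<le> g x"
  shows "\<bar>\<integral>x. f x \<partial>M\<bar> \<le> (\<integral>x. g x \<partial>M)"
proof -
  have "\<bar>\<integral>x. f x \<partial>M\<bar> \<le> (\<integral>x. \<bar>f x\<bar> \<partial>M)"
    using integral_norm_bound[of M f] by simp
  also have "\<dots> \<le> (\<integral>x. g x \<partial>M)"
    by (rule integral_mono) (use assms in auto)
  finally show ?thesis .
qed

lemma one_le_mult_real: "1 \<le> x \<Longrightarrow> 1 \<le> y \<Longrightarrow> 1 \<le> x * (y::real)"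
  using mult_mono[of 1 x 1 y] by simp

lemma pmf_integral_const[simp]: "(\<integral>x. c \<partial>measure_pmf M) = (c::real)"
  by (simp add: measure_pmf.prob_space)

locale qsys =
  fixes A S :: "nat pmf"
  assumes intA: "integrable (measure_pmf A) (\<lambda>a. (1 + real a)^3)"
    and intS: "integrable (measure_pmf S) (\<lambda>s. (1 + real s)^3)"
begin

definition EAS :: "(nat \<Rightarrow> nat \<Rightarrow> real) \<Rightarrow> real" where
  "EAS \<phi> = (\<integral>a. (\<integral>s. \<phi> a s \<partial>S) \<partial>A)"

definition good :: "(nat \<Rightarrow> nat \<Rightarrow> real) \<Rightarrow> bool" where
  "good \<phi> \<longleftrightarrow> (\<exists>C. \<forall>a s. \<bar>\<phi> a s\<bar> \<le> C * ((1 + real a)^3 * (1 + real s)^3))"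

lemma good_intS: assumes "good \<phi>" shows "integrable (measure_pmf S) (\<phi> a)"
proof -
  from assms obtain C where C: "\<And>a s. \<bar>\<phi> a s\<bar> \<le> C * ((1 + real a)^3 * (1 + real s)^3)"
    unfolding good_def by blast
  have "integrable (measure_pmf S) (\<lambda>s. C * ((1 + real a)^3 * (1 + real s)^3))"
    using integrable_mult_right[OF intS, of "C * (1 + real a)^3"] by (simp add: mult.assoc)
  then show ?thesis
    by (rule pmf_integrable_bound) (rule C)
qed

lemma good_intA: assumes "good \<phi>" shows "integrable (measure_pmf A) (\<lambda>a. \<integral>s. \<phi> a s \<partial>S)"
proof -
  from assms obtain C where C: "\<And>a s. \<bar>\<phi> a s\<bar> \<le> C * ((1 + real a)^3 * (1 + real s)^3)"
    unfolding good_def by blast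
  define K where "K = (\<integral>s. (1 + real s)^3 \<partial>S)"
  have "integrable (measure_pmf A) (\<lambda>a. (C * K) * (1 + real a)^3)"
    by (rule integrable_mult_right[OF intA])
  moreover have "\<bar>\<integral>s. \<phi> a s \<partial>S\<bar> \<le> (C * K) * (1 + real a)^3" for a
  proof -
    have "\<bar>\<integral>s. \<phi> a s \<partial>S\<bar> \<le> (\<integral>s. C * ((1 + real a)^3 * (1 + real s)^3) \<partial>S)"
    proof (rule pmf_abs_bound[OF good_intS[OF assms]])
      show "integrable (measure_pmf S) (\<lambda>s. C * ((1 + real a)^3 * (1 + real s)^3))"
        using integrable_mult_right[OF intS, of "C * (1 + real a)^3"] by (simp add: mult.assoc)
    qed (rule C)
    also have "\<dots> = (C * K) * (1 + real a)^3" by (simp add: K_def)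
    finally show ?thesis .
  qed
  ultimately show ?thesis by (rule pmf_integrable_bound)
qed

lemma good_add: "good \<phi> \<Longrightarrow> good \<psi> \<Longrightarrow> good (\<lambda>a s. \<phi> a s + \<psi> a s)"
  unfolding good_def
proof (elim exE)
  fix C D assume C: "\<forall>a s. \<bar>\<phi> a s\<bar> \<le> C * ((1 + real a)^3 * (1 + real s)^3)"
    and D: "\<forall>a s. \<bar>\<psi> a s\<bar> \<le> D * ((1 + real a)^3 * (1 + real s)^3)"
  show "\<exists>E. \<forall>a s. \<bar>\<phi> a s + \<psi> a s\<bar> \<le> E * ((1 + real a)^3 * (1 + real s)^3)"
  proof (intro exI allI)
    fix a s
    have "\<bar>\<phi> a s + \<psi> a s\<bar> \<le> \<bar>\<phi> a s\<bar> + \<bar>\<psi> a s\<bar>" by (rule abs_triangle_ineq)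
    also have "\<dots> \<le> (C + D) * ((1 + real a)^3 * (1 + real s)^3)"
      using C D by (simp add: distrib_right add_mono)
    finally show "\<bar>\<phi> a s + \<psi> a s\<bar> \<le> (C + D) * ((1 + real a)^3 * (1 + real s)^3)" .
  qed
qed

lemma good_le: "good \<psi> \<Longrightarrow> (\<And>a s. \<bar>\<phi> a s\<bar> \<le> \<bar>\<psi> a s\<bar>) \<Longrightarrow> good \<phi>"
  unfolding good_def by (meson order_trans)

lemma good_cmult: "good \<phi> \<Longrightarrow> good (\<lambda>a s. c * \<phi> a s)"
  unfolding good_def
proof (elim exE)
  fix C assume C: "\<forall>a s. \<bar>\<phi> a s\<bar> \<le> C * ((1 + real a)^3 * (1 + real s)^3)"
  show "\<exists>E. \<forall>a s. \<bar>c * \<phi> a s\<bar> \<le> E * ((1 + real a)^3 * (1 + real s)^3)"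
  proof (intro exI allI)
    fix a s
    have "\<bar>c * \<phi> a s\<bar> = \<bar>c\<bar> * \<bar>\<phi> a s\<bar>" by (simp add: abs_mult)
    also have "\<dots> \<le> \<bar>c\<bar> * (C * ((1 + real a)^3 * (1 + real s)^3))"
      using C by (intro mult_left_mono) auto
    finally show "\<bar>c * \<phi> a s\<bar> \<le> (\<bar>c\<bar> * C) * ((1 + real a)^3 * (1 + real s)^3)" by (simp add: mult_ac)
  qed
qed

lemma good_diff: "good \<phi> \<Longrightarrow> good \<psi> \<Longrightarrow> good (\<lambda>a s. \<phi> a s - \<psi> a s)"
  using good_add[of \<phi> "\<lambda>a s. (-1) * \<psi> a s"] good_cmult[of \<psi> "-1"] by simp

lemma good_poly: "good (\<lambda>a s. (1 + real a)^3 * (1 + real s)^3)"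
  unfolding good_def by (rule exI[of _ 1]) auto

lemma good_const: "good (\<lambda>a s. c)"
proof -
  have "\<bar>c\<bar> \<le> \<bar>\<bar>c\<bar> * ((1 + real a)^3 * (1 + real s)^3)\<bar>" for a s
  proof -
    have "1 \<le> (1 + real a)^3 * (1 + real s)^3"
      by (intro one_le_mult_real one_le_power) auto
    then show ?thesis by (simp add: abs_mult) (metis abs_ge_zero mult_le_cancel_left1 not_le)
  qed
  then show ?thesis by (intro good_le[OF good_cmult[OF good_poly, of "\<bar>c\<bar>"]])
qed

lemma EAS_add: "good \<phi> \<Longrightarrow> good \<psi> \<Longrightarrow> EAS (\<lambda>a s. \<phi> a s + \<psi> a s) = EAS \<phi> + EAS \<psi>"
  unfolding EAS_def
  by (simp add: Bochner_Integration.integral_add[OF good_intS good_intS]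
                Bochner_Integration.integral_add[OF good_intA good_intA])

lemma EAS_cmult: "EAS (\<lambda>a s. c * \<phi> a s) = c * EAS \<phi>"
  unfolding EAS_def by simp

lemma EAS_diff: "good \<phi> \<Longrightarrow> good \<psi> \<Longrightarrow> EAS (\<lambda>a s. \<phi> a s - \<psi> a s) = EAS \<phi> - EAS \<psi>"
  using EAS_add[of \<phi> "\<lambda>a s. (-1) * \<psi> a s"] good_cmult[of \<psi> "-1"] EAS_cmult[of "-1" \<psi>] by simp

lemma EAS_mono: "good \<phi> \<Longrightarrow> good \<psi> \<Longrightarrow> (\<And>a s. \<phi> a s \<le> \<psi> a s) \<Longrightarrow> EAS \<phi> \<le> EAS \<psi>"
  unfolding EAS_def
  by (intro integral_mono good_intA integral_mono good_intS) auto

lemma EAS_abs: "good \<phi> \<Longrightarrow> good \<psi> \<Longrightarrow> (\<And>a s. \<bar>\<phi> a s\<bar> \<le> \<psi> a s) \<Longrightarrow> \<bar>EAS \<phi>\<bar> \<le> EAS \<psi>"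
proof -
  assume g: "good \<phi>" "good \<psi>" and b: "\<And>a s. \<bar>\<phi> a s\<bar> \<le> \<psi> a s"
  have b1: "\<phi> a s \<le> \<psi> a s" for a s using b[of a s] by (simp add: abs_le_iff)
  have b2: "(-1) * \<psi> a s \<le> \<phi> a s" for a s using b[of a s] by (simp add: abs_le_iff)
  have "EAS \<phi> \<le> EAS \<psi>" by (intro EAS_mono g b1)
  moreover have "EAS (\<lambda>a s. (-1) * \<psi> a s) \<le> EAS \<phi>"
    by (intro EAS_mono g good_cmult b2)
  moreover have "EAS (\<lambda>a s. (-1) * \<psi> a s) = - EAS \<psi>" by (simp only: EAS_cmult)
  ultimately show ?thesis by linarith
qed

lemma EAS_const[simp]: "EAS (\<lambda>a s. c) = c"
  unfolding EAS_def by simp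

lemma EAS_a: "EAS (\<lambda>a s. g a) = (\<integral>a. g a \<partial>A)"
  unfolding EAS_def by simp

lemma EAS_s: "EAS (\<lambda>a s. k s) = (\<integral>s. k s \<partial>S)"
  unfolding EAS_def by simp

lemma EAS_prod: "EAS (\<lambda>a s. g a * k s) = (\<integral>a. g a \<partial>A) * (\<integral>s. k s \<partial>S)"
  unfolding EAS_def by simp

end


lemma pw3: "0 \<le> (x::real) \<Longrightarrow> i \<le> 3 \<Longrightarrow> x ^ i \<le> (1 + x)^3"
  by (rule order_trans[OF power_mono[of x "1+x" i] power_increasing]) auto

lemma pw3n: "i \<le> 3 \<Longrightarrow> real n ^ i \<le> (1 + real n)^3"
  by (rule pw3) auto

lemma pw1: "0 \<le> (x::real) \<Longrightarrow> 1 \<le> (1 + x)^3"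
  by (rule one_le_power) auto

context qsys
begin

lemma good_mono: "(\<And>a s. \<bar>\<phi> a s\<bar> \<le> C * ((1 + real a)^3 * (1 + real s)^3)) \<Longrightarrow> good \<phi>"
  unfolding good_def by blast

lemma good_pow: "i \<le> 3 \<Longrightarrow> j \<le> 3 \<Longrightarrow> good (\<lambda>a s. real a ^ i * real s ^ j)"
  by (rule good_mono[where C=1]) (auto intro!: mult_mono pw3n)

lemma good_a: "good (\<lambda>a s. real a)"
  using good_pow[of 1 0] by simp
lemma good_s: "good (\<lambda>a s. real s)"
  using good_pow[of 0 1] by simp

end

locale queue = qsys +
  fixes P :: "nat pmf" and eps :: real
  assumes stat: "bind_pmf P (queue_step A S) = P"
    and momP: "\<And>k. integrable (measure_pmf P) (\<lambda>q. real q ^ k)"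
    and eps_pos: "0 < eps"
    and mean: "(\<integral>a. real a \<partial>A) = (\<integral>s. real s \<partial>S) - eps"
begin

definition F :: "nat \<Rightarrow> nat \<Rightarrow> nat \<Rightarrow> nat" where "F q a s = nat (max (int q + int a - int s) 0)"
definition u :: "nat \<Rightarrow> nat \<Rightarrow> nat \<Rightarrow> real" where "u q a s = max (real s - real a - real q) 0"

lemma realF: "real (F q a s) = real q + real a - real s + u q a s"
  unfolding F_def u_def by (simp add: max_def of_nat_diff)

lemma u_nn: "0 \<le> u q a s" and u_le: "u q a s \<le> real s"
  unfolding u_def by auto

lemma good_u: "good (u q)"
  by (rule good_le[OF good_s]) (use u_nn u_le in auto)

lemma qs_integral:
  assumes "integrable (measure_pmf (queue_step A S q)) \<Psi>"
  shows "(\<integral>y. \<Psi> y \<partial>queue_step A S q) = EAS (\<lambda>a s. \<Psi> (F q a s))"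
  using bind_pmf_integral(1)[of A "\<lambda>a. map_pmf (\<lambda>s. F q a s) S" \<Psi>] assms
  by (simp add: queue_step_def F_def EAS_def)

lemma stationarity:
  assumes int: "integrable (measure_pmf P) \<Psi>"
  shows "(\<integral>q. EAS (\<lambda>a s. \<Psi> (F q a s)) \<partial>P) = (\<integral>q. \<Psi> q \<partial>P)"
    and "integrable (measure_pmf P) (\<lambda>q. EAS (\<lambda>a s. \<Psi> (F q a s)))"
proof -
  have i: "integrable (measure_pmf (bind_pmf P (queue_step A S))) \<Psi>" by (simp add: stat int)
  note B = bind_pmf_integral[OF i]
  have ae: "AE q in P. (\<integral>y. \<Psi> y \<partial>queue_step A S q) = EAS (\<lambda>a s. \<Psi> (F q a s))"
    using B(3) by eventually_elim (rule qs_integral)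
  have "(\<integral>q. EAS (\<lambda>a s. \<Psi> (F q a s)) \<partial>P) = (\<integral>q. (\<integral>y. \<Psi> y \<partial>queue_step A S q) \<partial>P)"
    by (rule integral_cong_AE) (use ae in \<open>auto elim: eventually_mono\<close>)
  also have "\<dots> = (\<integral>y. \<Psi> y \<partial>bind_pmf P (queue_step A S))" using B(1) by simp
  also have "\<dots> = (\<integral>q. \<Psi> q \<partial>P)" by (simp add: stat)
  finally show "(\<integral>q. EAS (\<lambda>a s. \<Psi> (F q a s)) \<partial>P) = (\<integral>q. \<Psi> q \<partial>P)" .
  show "integrable (measure_pmf P) (\<lambda>q. EAS (\<lambda>a s. \<Psi> (F q a s)))"
    using B(2) by (rule integrable_cong_AE_imp) (use ae in \<open>auto elim: eventually_mono\<close>)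
qed

lemma EAS_u_bound: "\<bar>EAS (u q)\<bar> \<le> (\<integral>s. real s \<partial>S)"
proof -
  have "\<bar>EAS (u q)\<bar> \<le> EAS (\<lambda>a s. real s)"
    by (rule EAS_abs[OF good_u good_s]) (use u_nn u_le in auto)
  then show ?thesis by (simp add: EAS_s)
qed

lemma int_EAS_u: "integrable (measure_pmf P) (\<lambda>q. EAS (u q))"
  by (rule pmf_integrable_const_bound) (rule EAS_u_bound)

lemma E_u: "(\<integral>q. EAS (u q) \<partial>P) = eps"
proof -
  have i1: "integrable (measure_pmf P) (\<lambda>q. real q)" using momP[of 1] by simp
  have "EAS (\<lambda>a s. real (F q a s)) = real q + ((\<integral>a. real a \<partial>A) - (\<integral>s. real s \<partial>S)) + EAS (u q)" for q
  proof -
    have "EAS (\<lambda>a s. real (F q a s)) = EAS (\<lambda>a s. ((real q + real a) - real s) + u q a s)"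
      by (simp add: realF)
    also have "\<dots> = EAS (\<lambda>a s. (real q + real a) - real s) + EAS (u q)"
      by (intro EAS_add good_diff good_add good_const good_a good_s good_u)
    also have "EAS (\<lambda>a s. (real q + real a) - real s) = EAS (\<lambda>a s. real q + real a) - EAS (\<lambda>a s. real s)"
      by (intro EAS_diff good_add good_const good_a good_s)
    also have "EAS (\<lambda>a s. real q + real a) = real q + EAS (\<lambda>a s. real a)"
      by (subst EAS_add) (auto intro: good_const good_a)
    finally show ?thesis by (simp add: EAS_a EAS_s)
  qed
  then have "(\<integral>q. real q + (- eps) + EAS (u q) \<partial>P) = (\<integral>q. real q \<partial>P)"
    using stationarity(1)[OF i1] by (simp add: mean)
  then show ?thesis using i1 int_EAS_u by simp
qed

end


lemma combo:
  fixes G f f1 :: "real \<Rightarrow> real"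
  assumes tay: "\<And>y d. \<bar>G (y + d) - G y - f y * d - f1 y * d^2 / 2\<bar> \<le> L * \<bar>d\<bar>^3"
    and f0: "f 0 = 0"
  shows "\<bar>G (max (y + d) 0) - G y - f y * d - f1 y * d^2 / 2 + f1 0 * (max (- (y + d)) 0)^2 / 2\<bar>
           \<le> L * (\<bar>d\<bar>^3 + (max (- (y + d)) 0)^3)"
proof (cases "y + d \<ge> 0")
  case True
  then show ?thesis using tay[of y d] by (simp add: max_def)
next
  case False
  define W where "W = y + d"
  have W: "W < 0" using False by (simp add: W_def)
  have t1: "\<bar>G W - G y - f y * d - f1 y * d^2 / 2\<bar> \<le> L * \<bar>d\<bar>^3"
    using tay[of y d] by (simp add: W_def)
  have t2: "\<bar>G W - G 0 - f1 0 * W^2 / 2\<bar> \<le> L * \<bar>W\<bar>^3"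
    using tay[of 0 W] f0 by simp
  have e1: "max (y + d) 0 = 0" "max (- (y + d)) 0 = - W" using W by (auto simp: W_def)
  have e2: "\<bar>W\<bar>^3 = (- W)^3" using W by simp
  have "G 0 - G y - f y * d - f1 y * d^2 / 2 + f1 0 * (- W)^2 / 2
        = (G W - G y - f y * d - f1 y * d^2 / 2) - (G W - G 0 - f1 0 * W^2 / 2)"
    by (simp add: power2_eq_square)
  also have "\<bar>\<dots>\<bar> \<le> L * \<bar>d\<bar>^3 + L * \<bar>W\<bar>^3"
    using t1 t2 abs_triangle_ineq4 by (smt (verit))
  finally have fin: "\<bar>G 0 - G y - f y * d - f1 y * d^2 / 2 + f1 0 * (- W)^2 / 2\<bar> \<le> L * \<bar>d\<bar>^3 + L * \<bar>W\<bar>^3" .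
  show ?thesis unfolding e1 using fin by (simp add: e2 distrib_left right_diff_distrib)
qed

lemma max_scale:
  fixes e X :: real
  assumes e: "0 < e"
  shows "max (e * X) 0 = e * max X 0" and "max (- (e * X)) 0 = e * max (- X) 0"
proof -
  have "max (e * X) 0 = e * max X 0 \<and> max (- (e * X)) 0 = e * max (- X) 0"
  proof (cases "0 \<le> X")
    case True
    then have "0 \<le> e * X" using e by simp
    with True show ?thesis by (simp add: max_def)
  next
    case False
    then have "e * X < 0" using e by (simp add: mult_pos_neg)
    with False show ?thesis by (simp add: max_def)
  qed
  then show "max (e * X) 0 = e * max X 0" and "max (- (e * X)) 0 = e * max (- X) 0" by auto
qed

locale main = queue A S P eps + stein l h for A S P eps l h +
  assumes l_var: "l * (measure_pmf.variance A real + measure_pmf.variance S real) = 2"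
begin

abbreviation "VA \<equiv> measure_pmf.variance A real"
abbreviation "VS \<equiv> measure_pmf.variance S real"

lemma iA: "i \<le> 3 \<Longrightarrow> integrable (measure_pmf A) (\<lambda>a. real a ^ i)"
  by (rule pmf_integrable_bound[OF intA]) (simp add: pw3n)
lemma iS: "i \<le> 3 \<Longrightarrow> integrable (measure_pmf S) (\<lambda>a. real a ^ i)"
  by (rule pmf_integrable_bound[OF intS]) (simp add: pw3n)

lemma EAS_D: "EAS (\<lambda>a s. real a - real s) = - eps"
  by (subst EAS_diff[OF good_a good_s]) (simp add: EAS_a EAS_s mean)

lemma EAS_D2: "EAS (\<lambda>a s. (real a - real s)^2) = VA + VS + eps^2"
proof -
  have g1: "good (\<lambda>a s. real a ^ 2)" using good_pow[of 2 0] by simp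
  have g2: "good (\<lambda>a s. 2 * (real a * real s))" using good_cmult[OF good_pow[of 1 1], of 2] by simp
  have g3: "good (\<lambda>a s. real s ^ 2)" using good_pow[of 0 2] by simp
  have "EAS (\<lambda>a s. (real a - real s)^2) = EAS (\<lambda>a s. (real a ^ 2 - 2 * (real a * real s)) + real s ^ 2)"
    by (simp add: power2_eq_square algebra_simps)
  also have "\<dots> = EAS (\<lambda>a s. real a ^ 2) - EAS (\<lambda>a s. 2 * (real a * real s)) + EAS (\<lambda>a s. real s ^ 2)"
    by (simp add: EAS_add EAS_diff good_diff g1 g2 g3)
  also have "\<dots> = (\<integral>a. real a ^ 2 \<partial>A) - 2 * ((\<integral>a. real a \<partial>A) * (\<integral>s. real s \<partial>S)) + (\<integral>s. real s ^ 2 \<partial>S)"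
    by (simp add: EAS_a EAS_s EAS_cmult EAS_prod)
  finally have E: "EAS (\<lambda>a s. (real a - real s)^2) = (\<integral>a. real a ^ 2 \<partial>A) - 2 * ((\<integral>a. real a \<partial>A) * (\<integral>s. real s \<partial>S)) + (\<integral>s. real s ^ 2 \<partial>S)" .
  have VA: "VA = (\<integral>a. real a ^ 2 \<partial>A) - (\<integral>a. real a \<partial>A)^2"
    using iA[of 1] iA[of 2] by (subst measure_pmf.variance_eq) auto
  have VS: "VS = (\<integral>a. real a ^ 2 \<partial>S) - (\<integral>a. real a \<partial>S)^2"
    using iS[of 1] iS[of 2] by (subst measure_pmf.variance_eq) auto
  show ?thesis unfolding E VA VS by (simp add: mean power2_eq_square algebra_simps)
qed

definition m3 :: "nat \<Rightarrow> nat \<Rightarrow> real" where "m3 a s = (real a + real s)^3 + real s ^ 3"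

lemma m3_bound: "\<bar>m3 a s\<bar> \<le> 2 * ((1 + real a)^3 * (1 + real s)^3)"
proof -
  have "real a + real s \<le> (1 + real a) * (1 + real s)" by (simp add: algebra_simps)
  then have 1: "(real a + real s)^3 \<le> (1 + real a)^3 * (1 + real s)^3"
    by (metis power_mono power_mult_distrib add_nonneg_nonneg of_nat_0_le_iff)
  have "real s ^ 3 \<le> (1 + real s)^3" by (rule pw3n) simp
  also have "\<dots> \<le> (1 + real a)^3 * (1 + real s)^3"
    using pw1[of "real a"] by (simp add: mult_le_cancel_right1)
  finally have 2: "real s ^ 3 \<le> (1 + real a)^3 * (1 + real s)^3" .
  show ?thesis using 1 2 by (simp add: m3_def)
qed

lemma good_m3: "good m3"
  by (rule good_mono[where C=2]) (rule m3_bound)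

lemma Du_bound: "\<bar>real a - real s\<bar>^3 + (u q a s)^3 \<le> m3 a s"
proof -
  have "\<bar>real a - real s\<bar>^3 \<le> (real a + real s)^3" by (rule power_mono) auto
  moreover have "(u q a s)^3 \<le> real s ^ 3" by (rule power_mono) (use u_nn u_le in auto)
  ultimately show ?thesis unfolding m3_def by (rule add_mono)
qed

lemma main_bound:
  assumes K: "0 \<le> K"
  shows "\<bar>(\<integral>q. h (eps * real q) \<partial>P) - c\<bar>
          \<le> eps^2 / 2 + (K * eps + (\<integral>s. (if K < real s then real s ^ 2 else 0) \<partial>S)) / 2 + 2 * l * eps * EAS m3"
proof -
  obtain G where dG: "\<And>x. (G has_real_derivative f x) (at x)" using G_exists by blast
  have tay: "\<bar>G (y + d) - G y - f y * d - f1 y * d^2 / 2\<bar> \<le> (2 * l) * \<bar>d\<bar>^3" for y d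
    by (rule taylor2[OF dG f_deriv f1_lip])
  define \<Psi> where "\<Psi> n = G (eps * real n)" for n
  define y where "y q = eps * real q" for q
  define D where "D a s = real a - real s" for a s :: nat
  let ?V = "VA + VS"
  have lV: "l * ?V = 2" by (rule l_var)
  have Psi_b: "\<bar>\<Psi> n\<bar> \<le> \<bar>G 0\<bar> + eps^2 / 2 * real n ^ 2 + 2 * l * eps^3 * real n ^ 3" for n
  proof -
    have t: "\<bar>G (eps * real n) - G 0 - f1 0 * (eps * real n)^2 / 2\<bar> \<le> 2 * l * \<bar>eps * real n\<bar>^3"
      using tay[of 0 "eps * real n"] f0 by simp
    have "\<bar>f1 0 * (eps * real n)^2 / 2\<bar> = \<bar>f1 0\<bar> * (eps^2 / 2 * real n ^ 2)"
      by (simp add: abs_mult power_mult_distrib)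
    also have "\<dots> \<le> 1 * (eps^2 / 2 * real n ^ 2)"
      by (rule mult_right_mono) (use f1_bound[of 0] in auto)
    finally have "\<bar>f1 0 * (eps * real n)^2 / 2\<bar> \<le> eps^2 / 2 * real n ^ 2" by simp
    moreover have "\<bar>eps * real n\<bar>^3 = eps^3 * real n ^ 3" using eps_pos by (simp add: power_mult_distrib)
    ultimately show ?thesis using t by (simp add: \<Psi>_def)
  qed
  have Psi_int: "integrable (measure_pmf P) \<Psi>"
    by (rule pmf_integrable_bound[OF _ Psi_b]) (use momP[of 2] momP[of 3] in auto)
  note St = stationarity[OF Psi_int]
  define r where "r q a s = \<Psi> (F q a s) - \<Psi> q - f (y q) * eps * D a s - f1 (y q) * eps^2 * (D a s)^2 / 2
                              + f1 0 * eps^2 * (u q a s)^2 / 2" for q a s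
  have r_b: "\<bar>r q a s\<bar> \<le> (2 * l * eps^3) * m3 a s" for q a s
  proof -
    have cb: "\<bar>G (max (y q + eps * D a s) 0) - G (y q) - f (y q) * (eps * D a s) - f1 (y q) * (eps * D a s)^2 / 2
           + f1 0 * (max (- (y q + eps * D a s)) 0)^2 / 2\<bar>
           \<le> (2 * l) * (\<bar>eps * D a s\<bar>^3 + (max (- (y q + eps * D a s)) 0)^3)"
      by (rule combo[OF tay f0])
    define X where "X = real q + real a - real s"
    have yX: "y q + eps * D a s = eps * X" by (simp add: y_def D_def X_def algebra_simps)
    have FX: "real (F q a s) = max X 0" by (simp add: realF u_def X_def max_def)
    have uX: "u q a s = max (- X) 0" by (simp add: u_def X_def max_def)
    have e1: "max (y q + eps * D a s) 0 = eps * real (F q a s)"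
      unfolding yX FX by (rule max_scale(1)[OF eps_pos])
    have e2: "max (- (y q + eps * D a s)) 0 = eps * u q a s"
      unfolding yX uX by (rule max_scale(2)[OF eps_pos])
    have "r q a s = G (max (y q + eps * D a s) 0) - G (y q) - f (y q) * (eps * D a s) - f1 (y q) * (eps * D a s)^2 / 2
           + f1 0 * (max (- (y q + eps * D a s)) 0)^2 / 2"
      unfolding e1 e2 by (simp add: r_def \<Psi>_def y_def power_mult_distrib algebra_simps)
    then have "\<bar>r q a s\<bar> \<le> (2 * l) * (eps^3 * (\<bar>D a s\<bar>^3 + (u q a s)^3))"
      using cb unfolding e2 using eps_pos by (simp add: power_mult_distrib abs_mult distrib_left)
    also have "\<dots> \<le> (2 * l) * (eps^3 * m3 a s)"
      using Du_bound[of a s q] l_pos eps_pos by (intro mult_left_mono) (auto simp: D_def)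
    finally show ?thesis by (simp add: mult_ac)
  qed
  have good_r: "good (r q)" for q
    by (rule good_le[OF good_cmult[OF good_m3, of "2 * l * eps^3"]]) (rule order_trans[OF r_b abs_ge_self])
  have EASr_b: "\<bar>EAS (r q)\<bar> \<le> 2 * l * eps^3 * EAS m3" for q
    using EAS_abs[OF good_r good_cmult[OF good_m3], of q "2 * l * eps^3"] r_b by (simp add: EAS_cmult)
  have gD: "good D" unfolding D_def by (rule good_diff[OF good_a good_s])
  have gD2: "good (\<lambda>a s. (D a s)^2)"
  proof -
    have "good (\<lambda>a s. real a ^ 2 - 2 * (real a * real s) + real s ^ 2)"
      by (intro good_add good_diff good_cmult) (use good_pow[of 2 0] good_pow[of 1 1] good_pow[of 0 2] in simp_all)
    then show ?thesis by (rule good_le) (simp add: D_def power2_eq_square algebra_simps)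
  qed
  have gu2: "good (\<lambda>a s. (u q a s)^2)" for q
  proof -
    have "good (\<lambda>a s. real s ^ 2)" using good_pow[of 0 2] by simp
    then show ?thesis by (rule good_le) (use u_nn u_le in \<open>auto intro: power_mono\<close>)
  qed
  define U2 where "U2 q = EAS (\<lambda>a s. (u q a s)^2)" for q
  have ES2: "(\<integral>s. real s ^ 2 \<partial>S) = EAS (\<lambda>a s. real s ^ 2)" by (simp add: EAS_s)
  have U2_nn: "0 \<le> U2 q" for q
    using EAS_mono[OF good_const gu2, of 0 q] by (simp add: U2_def)
  have U2_le: "U2 q \<le> (\<integral>s. real s ^ 2 \<partial>S)" for q
    unfolding U2_def ES2 using good_pow[of 0 2]
    by (intro EAS_mono gu2) (use u_nn u_le in \<open>auto intro: power_mono\<close>)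
  have U2_int: "integrable (measure_pmf P) U2"
    by (rule pmf_integrable_const_bound[where B="\<integral>s. real s ^ 2 \<partial>S"]) (use U2_nn U2_le in auto)
  have ptw: "EAS (\<lambda>a s. \<Psi> (F q a s)) - \<Psi> q =
      eps^2 * (h (y q) - c) + (eps^4 / 2 * f1 (y q) - f1 0 * eps^2 / 2 * U2 q + EAS (r q))" for q
  proof -
    define c1 where "c1 = f (y q) * eps"
    define c2 where "c2 = f1 (y q) * eps^2 / 2"
    define c3 where "c3 = f1 0 * eps^2 / 2"
    have eq: "\<Psi> (F q a s) = (((\<Psi> q + c1 * D a s) + c2 * (D a s)^2) - c3 * (u q a s)^2) + r q a s" for a s
      by (simp add: r_def c1_def c2_def c3_def)
    have gA1: "good (\<lambda>a s. c1 * D a s)" by (rule good_cmult[OF gD])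
    have gA: "good (\<lambda>a s. \<Psi> q + c1 * D a s)" by (rule good_add[OF good_const gA1])
    have gB: "good (\<lambda>a s. c2 * (D a s)^2)" by (rule good_cmult[OF gD2])
    have gC: "good (\<lambda>a s. c3 * (u q a s)^2)" by (rule good_cmult[OF gu2])
    have gAB: "good (\<lambda>a s. (\<Psi> q + c1 * D a s) + c2 * (D a s)^2)" by (rule good_add[OF gA gB])
    have gABC: "good (\<lambda>a s. ((\<Psi> q + c1 * D a s) + c2 * (D a s)^2) - c3 * (u q a s)^2)"
      by (rule good_diff[OF gAB gC])
    have "EAS (\<lambda>a s. \<Psi> (F q a s)) = EAS (\<lambda>a s. (((\<Psi> q + c1 * D a s) + c2 * (D a s)^2) - c3 * (u q a s)^2) + r q a s)"
      by (simp only: eq)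
    also have "\<dots> = EAS (\<lambda>a s. ((\<Psi> q + c1 * D a s) + c2 * (D a s)^2) - c3 * (u q a s)^2) + EAS (r q)"
      by (rule EAS_add[OF gABC good_r])
    also have "EAS (\<lambda>a s. ((\<Psi> q + c1 * D a s) + c2 * (D a s)^2) - c3 * (u q a s)^2)
        = EAS (\<lambda>a s. (\<Psi> q + c1 * D a s) + c2 * (D a s)^2) - EAS (\<lambda>a s. c3 * (u q a s)^2)"
      by (rule EAS_diff[OF gAB gC])
    also have "EAS (\<lambda>a s. (\<Psi> q + c1 * D a s) + c2 * (D a s)^2)
        = EAS (\<lambda>a s. \<Psi> q + c1 * D a s) + EAS (\<lambda>a s. c2 * (D a s)^2)"
      by (rule EAS_add[OF gA gB])
    also have "EAS (\<lambda>a s. \<Psi> q + c1 * D a s) = EAS (\<lambda>a s. \<Psi> q) + EAS (\<lambda>a s. c1 * D a s)"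
      by (rule EAS_add[OF good_const gA1])
    also have "EAS (\<lambda>a s. c1 * D a s) = c1 * EAS D" by (rule EAS_cmult)
    also have "EAS (\<lambda>a s. c2 * (D a s)^2) = c2 * EAS (\<lambda>a s. (D a s)^2)" by (rule EAS_cmult)
    also have "EAS (\<lambda>a s. c3 * (u q a s)^2) = c3 * U2 q" unfolding U2_def by (rule EAS_cmult)
    also have "EAS (\<lambda>a s. \<Psi> q) = \<Psi> q" by simp
    also have "EAS D = - eps" using EAS_D by (simp add: D_def[abs_def])
    also have "EAS (\<lambda>a s. (D a s)^2) = ?V + eps^2" using EAS_D2 by (simp add: D_def)
    finally have E1: "EAS (\<lambda>a s. \<Psi> (F q a s)) - \<Psi> q = (- (eps^2 * f (y q))) + eps^2 * ((?V / 2) * f1 (y q))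
        + eps^4 / 2 * f1 (y q) - f1 0 * eps^2 / 2 * U2 q + EAS (r q)"
      by (simp add: c1_def c2_def c3_def algebra_simps power2_eq_square power4_eq_xxxx)
    have eqV: "(?V / 2) * f1 (y q) = f (y q) + h (y q) - c"
    proof -
      have "(?V / 2) * f1 (y q) = (l * ?V / 2) * (f (y q) + h (y q) - c)" by (simp add: f1_def)
      then show ?thesis by (simp add: lV)
    qed
    show ?thesis using E1[unfolded eqV] by (simp add: algebra_simps)
  qed
  define Rest where "Rest q = eps^4 / 2 * f1 (y q) - f1 0 * eps^2 / 2 * U2 q + EAS (r q)" for q
  have h_int: "integrable (measure_pmf P) (\<lambda>q. h (y q))"
  proof (rule pmf_integrable_bound)
    show "integrable (measure_pmf P) (\<lambda>q. \<bar>h 0\<bar> + eps * real q)" using momP[of 1] by simp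
    show "\<bar>h (y q)\<bar> \<le> \<bar>h 0\<bar> + eps * real q" for q
      using lip[of "y q" 0] eps_pos by (simp add: y_def)
  qed
  have Rest_b: "\<bar>Rest q\<bar> \<le> eps^4 / 2 + eps^2 / 2 * U2 q + 2 * l * eps^3 * EAS m3" for q
  proof -
    have "\<bar>eps^4 / 2 * f1 (y q)\<bar> = eps^4 / 2 * \<bar>f1 (y q)\<bar>" by (simp add: abs_mult)
    also have "\<dots> \<le> eps^4 / 2 * 1" by (rule mult_left_mono) (use f1_bound[of "y q"] in auto)
    finally have "\<bar>eps^4 / 2 * f1 (y q)\<bar> \<le> eps^4 / 2" by simp
    moreover have "\<bar>f1 0 * eps^2 / 2 * U2 q\<bar> \<le> eps^2 / 2 * U2 q"
    proof -
      have "\<bar>f1 0 * eps^2 / 2 * U2 q\<bar> = \<bar>f1 0\<bar> * (eps^2 / 2 * U2 q)" using U2_nn[of q] by (simp add: abs_mult)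
      also have "\<dots> \<le> 1 * (eps^2 / 2 * U2 q)"
        by (rule mult_right_mono) (use f1_bound[of 0] U2_nn[of q] in auto)
      finally show ?thesis by simp
    qed
    ultimately show ?thesis using EASr_b[of q] unfolding Rest_def by linarith
  qed
  have b_int: "integrable (measure_pmf P) (\<lambda>q. eps^4 / 2 + eps^2 / 2 * U2 q + 2 * l * eps^3 * EAS m3)"
    using U2_int by simp
  have Rest_int: "integrable (measure_pmf P) Rest"
    by (rule pmf_integrable_bound[OF b_int Rest_b])
  have "(\<integral>q. EAS (\<lambda>a s. \<Psi> (F q a s)) - \<Psi> q \<partial>P) = 0"
    using St Psi_int by simp
  moreover have "(\<integral>q. EAS (\<lambda>a s. \<Psi> (F q a s)) - \<Psi> q \<partial>P) = eps^2 * ((\<integral>q. h (y q) \<partial>P) - c) + (\<integral>q. Rest q \<partial>P)"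
    unfolding ptw Rest_def[symmetric] using h_int Rest_int by simp
  ultimately have key: "eps^2 * ((\<integral>q. h (y q) \<partial>P) - c) = - (\<integral>q. Rest q \<partial>P)" by simp
  have "\<bar>\<integral>q. Rest q \<partial>P\<bar> \<le> (\<integral>q. eps^4 / 2 + eps^2 / 2 * U2 q + 2 * l * eps^3 * EAS m3 \<partial>P)"
    by (rule pmf_abs_bound[OF Rest_int b_int Rest_b])
  also have "\<dots> = eps^4 / 2 + eps^2 / 2 * (\<integral>q. U2 q \<partial>P) + 2 * l * eps^3 * EAS m3"
    using U2_int by simp
  also have "(\<integral>q. U2 q \<partial>P) \<le> K * eps + (\<integral>s. (if K < real s then real s ^ 2 else 0) \<partial>S)"
  proof -
    define tl where "tl s = (if K < real s then real s ^ 2 else 0)" for s :: nat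
    have gtl: "good (\<lambda>a s. tl s)"
      by (rule good_le[OF good_pow[of 0 2]]) (simp_all add: tl_def)
    have pt: "(u q a s)^2 \<le> K * u q a s + tl s" for q a s
    proof (cases "K < real s")
      case True
      then have "(u q a s)^2 \<le> real s ^ 2" using u_nn u_le by (intro power_mono) auto
      moreover have "0 \<le> K * u q a s" using K u_nn by simp
      ultimately show ?thesis using True by (simp add: tl_def)
    next
      case False
      then have "u q a s * u q a s \<le> u q a s * K" using u_nn[of q a s] u_le[of q a s]
        by (intro mult_left_mono) auto
      then show ?thesis using False by (simp add: tl_def power2_eq_square mult.commute)
    qed
    have "U2 q \<le> K * EAS (u q) + (\<integral>s. tl s \<partial>S)" for q
    proof -
      have "U2 q \<le> EAS (\<lambda>a s. K * u q a s + tl s)"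
        unfolding U2_def by (intro EAS_mono gu2 good_add good_cmult good_u gtl pt)
      also have "\<dots> = K * EAS (u q) + (\<integral>s. tl s \<partial>S)"
        by (simp add: EAS_add good_cmult good_u gtl EAS_cmult EAS_s)
      finally show ?thesis .
    qed
    then have "(\<integral>q. U2 q \<partial>P) \<le> (\<integral>q. K * EAS (u q) + (\<integral>s. tl s \<partial>S) \<partial>P)"
      by (intro integral_mono U2_int) (use int_EAS_u in auto)
    also have "\<dots> = K * eps + (\<integral>s. tl s \<partial>S)" using int_EAS_u E_u by simp
    finally show ?thesis by (simp add: tl_def)
  qed
  finally have RB: "\<bar>\<integral>q. Rest q \<partial>P\<bar> \<le> eps^4 / 2 + eps^2 / 2 * (K * eps + (\<integral>s. (if K < real s then real s ^ 2 else 0) \<partial>S)) + 2 * l * eps^3 * EAS m3"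
    using eps_pos by (simp add: mult_left_mono)
  have "eps^2 * \<bar>(\<integral>q. h (y q) \<partial>P) - c\<bar> = \<bar>\<integral>q. Rest q \<partial>P\<bar>"
  proof -
    have "\<bar>eps^2 * ((\<integral>q. h (y q) \<partial>P) - c)\<bar> = \<bar>\<integral>q. Rest q \<partial>P\<bar>" using key by simp
    then show ?thesis by (simp only: abs_mult abs_power2)
  qed
  also note RB
  also have "eps^4 / 2 + eps^2 / 2 * (K * eps + (\<integral>s. (if K < real s then real s ^ 2 else 0) \<partial>S)) + 2 * l * eps^3 * EAS m3
       = eps^2 * (eps^2 / 2 + (K * eps + (\<integral>s. (if K < real s then real s ^ 2 else 0) \<partial>S)) / 2 + 2 * l * eps * EAS m3)"
    by (simp add: algebra_simps power2_eq_square power3_eq_cube power4_eq_xxxx)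
  finally show ?thesis using eps_pos by (simp add: y_def mult_le_cancel_left_pos)
qed

end


lemma pow3_exp:
  fixes x \<theta> :: real
  assumes x: "0 \<le> x" and th: "0 < \<theta>"
  shows "(1 + x)^3 \<le> (27 * exp \<theta> / \<theta>^3) * exp (\<theta> * x)"
proof -
  define t where "t = \<theta> * (1 + x) / 3"
  have t0: "0 \<le> t" using x th by (simp add: t_def)
  have "t \<le> exp t" using exp_ge_add_one_self[of t] by linarith
  then have "t^3 \<le> (exp t)^3" using t0 by (intro power_mono) auto
  also have "(exp t)^3 = exp (of_nat 3 * t)" by (rule exp_of_nat_mult[symmetric])
  also have "of_nat 3 * t = \<theta> + \<theta> * x" by (simp add: t_def algebra_simps)
  also have "exp (\<theta> + \<theta> * x) = exp \<theta> * exp (\<theta> * x)" by (rule exp_add)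
  finally have "\<theta>^3 * (1 + x)^3 / 27 \<le> exp \<theta> * exp (\<theta> * x)"
    by (simp add: t_def power_divide power_mult_distrib)
  then have "\<theta>^3 * (1 + x)^3 \<le> 27 * (exp \<theta> * exp (\<theta> * x))" by simp
  then show ?thesis using th by (simp add: field_simps)
qed

lemma sq_exp:
  fixes x \<theta> :: real
  assumes x: "0 \<le> x" and th: "0 < \<theta>"
  shows "x^2 \<le> (16 / \<theta>^2) * exp (\<theta> * x / 2)"
proof -
  define t where "t = \<theta> * x / 4"
  have t0: "0 \<le> t" using x th by (simp add: t_def)
  have "t \<le> exp t" using exp_ge_add_one_self[of t] by linarith
  then have "t^2 \<le> (exp t)^2" using t0 by (intro power_mono) auto
  also have "(exp t)^2 = exp (of_nat 2 * t)" by (rule exp_of_nat_mult[symmetric])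
  also have "of_nat 2 * t = \<theta> * x / 2" by (simp add: t_def)
  finally have "\<theta>^2 * x^2 / 16 \<le> exp (\<theta> * x / 2)"
    by (simp add: t_def power_divide power_mult_distrib)
  then have "\<theta>^2 * x^2 \<le> 16 * exp (\<theta> * x / 2)" by simp
  then show ?thesis using th by (simp add: field_simps)
qed

lemma exp_mom:
  fixes M :: "nat pmf"
  assumes th: "0 < \<theta>" and b: "(\<integral>\<^sup>+x. ennreal (exp (\<theta> * real x)) \<partial>measure_pmf M) \<le> ennreal D"
  shows "integrable (measure_pmf M) (\<lambda>x. exp (\<theta> * real x))"
    and "(\<integral>x. exp (\<theta> * real x) \<partial>M) \<le> D"
    and "1 \<le> D"
proof -
  have "(\<integral>\<^sup>+x. 1 \<partial>measure_pmf M) \<le> (\<integral>\<^sup>+x. ennreal (exp (\<theta> * real x)) \<partial>measure_pmf M)"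
    by (intro nn_integral_mono) (use th in auto)
  then have a: "1 \<le> (\<integral>\<^sup>+x. ennreal (exp (\<theta> * real x)) \<partial>measure_pmf M)"
    by (simp add: measure_pmf.emeasure_space_1)
  have "1 \<le> ennreal D" using order_trans[OF a b] .
  then show D1: "1 \<le> D" by simp
  show int: "integrable (measure_pmf M) (\<lambda>x. exp (\<theta> * real x))"
    by (rule integrableI_bounded) (use b in \<open>auto simp: top_unique less_top[symmetric] intro: le_less_trans\<close>)
  have "(\<integral>x. exp (\<theta> * real x) \<partial>M) = enn2real (\<integral>\<^sup>+x. ennreal (exp (\<theta> * real x)) \<partial>measure_pmf M)"
    by (rule integral_eq_nn_integral) auto
  also have "\<dots> \<le> D" by (rule enn2real_leI) (use D1 b in auto)
  finally show "(\<integral>x. exp (\<theta> * real x) \<partial>M) \<le> D" .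
qed

lemma cube_bound:
  fixes M :: "nat pmf"
  assumes th: "0 < \<theta>" and b: "(\<integral>\<^sup>+x. ennreal (exp (\<theta> * real x)) \<partial>measure_pmf M) \<le> ennreal D"
  shows "integrable (measure_pmf M) (\<lambda>x. (1 + real x)^3)"
    and "(\<integral>x. (1 + real x)^3 \<partial>M) \<le> 27 * exp \<theta> / \<theta>^3 * D"
proof -
  note E = exp_mom[OF th b]
  have i2: "integrable (measure_pmf M) (\<lambda>x. (27 * exp \<theta> / \<theta>^3) * exp (\<theta> * real x))"
    using E(1) by simp
  have pt: "\<bar>(1 + real x)^3\<bar> \<le> (27 * exp \<theta> / \<theta>^3) * exp (\<theta> * real x)" for x
    using pow3_exp[of "real x" \<theta>] th by simp
  show i1: "integrable (measure_pmf M) (\<lambda>x. (1 + real x)^3)"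
    by (rule pmf_integrable_bound[OF i2 pt])
  have "(\<integral>x. (1 + real x)^3 \<partial>M) \<le> (\<integral>x. (27 * exp \<theta> / \<theta>^3) * exp (\<theta> * real x) \<partial>M)"
    by (rule integral_mono[OF i1 i2]) (use pt in auto)
  also have "\<dots> = (27 * exp \<theta> / \<theta>^3) * (\<integral>x. exp (\<theta> * real x) \<partial>M)" by simp
  also have "\<dots> \<le> (27 * exp \<theta> / \<theta>^3) * D" using E(2) th by (intro mult_left_mono) auto
  finally show "(\<integral>x. (1 + real x)^3 \<partial>M) \<le> 27 * exp \<theta> / \<theta>^3 * D" by simp
qed

lemma tail_bound:
  fixes M :: "nat pmf"
  assumes th: "0 < \<theta>" and b: "(\<integral>\<^sup>+x. ennreal (exp (\<theta> * real x)) \<partial>measure_pmf M) \<le> ennreal D"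
  shows "(\<integral>s. (if K < real s then real s ^ 2 else 0) \<partial>M) \<le> (16 / \<theta>^2) * exp (- \<theta> * K / 2) * D"
proof -
  note E = exp_mom[OF th b]
  define c where "c = (16 / \<theta>^2) * exp (- \<theta> * K / 2)"
  have c0: "0 \<le> c" by (simp add: c_def)
  have i2: "integrable (measure_pmf M) (\<lambda>x. c * exp (\<theta> * real x))"
    using E(1) by simp
  have pt: "\<bar>if K < real s then real s ^ 2 else 0\<bar> \<le> c * exp (\<theta> * real s)" for s
  proof (cases "K < real s")
    case True
    have "real s ^ 2 \<le> (16 / \<theta>^2) * exp (\<theta> * real s / 2)" by (rule sq_exp) (use th in auto)
    also have "\<dots> \<le> (16 / \<theta>^2) * (exp (- \<theta> * K / 2) * exp (\<theta> * real s))"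
    proof (rule mult_left_mono)
      have "\<theta> * real s / 2 \<le> - \<theta> * K / 2 + \<theta> * real s" using True th by (simp add: field_simps)
      then show "exp (\<theta> * real s / 2) \<le> exp (- \<theta> * K / 2) * exp (\<theta> * real s)"
        by (simp add: exp_add[symmetric])
    qed simp
    also have "\<dots> = c * exp (\<theta> * real s)" by (simp add: c_def)
    finally show ?thesis using True by simp
  next
    case False
    then show ?thesis using c0 by simp
  qed
  have i1: "integrable (measure_pmf M) (\<lambda>s. if K < real s then real s ^ 2 else 0)"
    by (rule pmf_integrable_bound[OF i2 pt])
  have "(\<integral>s. (if K < real s then real s ^ 2 else 0) \<partial>M) \<le> (\<integral>x. c * exp (\<theta> * real x) \<partial>M)"
    by (rule integral_mono[OF i1 i2]) (use pt in \<open>auto simp: abs_le_iff\<close>)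
  also have "\<dots> = c * (\<integral>x. exp (\<theta> * real x) \<partial>M)" by simp
  also have "\<dots> \<le> c * D" using E(2) c0 by (intro mult_left_mono) auto
  finally show ?thesis by (simp add: c_def)
qed

context main
begin

lemma EAS_m3_le: "EAS m3 \<le> 2 * ((\<integral>a. (1 + real a)^3 \<partial>A) * (\<integral>s. (1 + real s)^3 \<partial>S))"
proof -
  have "EAS m3 \<le> EAS (\<lambda>a s. 2 * ((1 + real a)^3 * (1 + real s)^3))"
    by (intro EAS_mono good_m3 good_cmult good_poly) (use m3_bound in \<open>auto simp: abs_le_iff\<close>)
  also have "\<dots> = 2 * ((\<integral>a. (1 + real a)^3 \<partial>A) * (\<integral>s. (1 + real s)^3 \<partial>S))"
    by (simp add: EAS_cmult EAS_prod)
  finally show ?thesis .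
qed

end


theorem theorem2:
  fixes Arr :: "real \<Rightarrow> nat pmf" and Srv :: "nat pmf" and Pi :: "real \<Rightarrow> nat pmf"
    and \<mu> c0 \<theta>1 \<theta>2 D1 D2 :: real
  assumes mu_pos: "\<mu> > 0"
    and srv_mean: "measure_pmf.expectation Srv real = \<mu>"
    and arr_mean: "\<And>\<epsilon>. 0 < \<epsilon> \<Longrightarrow> \<epsilon> < \<mu> \<Longrightarrow> measure_pmf.expectation (Arr \<epsilon>) real = \<mu> - \<epsilon>"
    and c0_pos: "c0 > 0"
    and var_lb: "\<And>\<epsilon>. 0 < \<epsilon> \<Longrightarrow> \<epsilon> < \<mu> \<Longrightarrow>
        measure_pmf.variance (Arr \<epsilon>) real + measure_pmf.variance Srv real \<ge> c0"
    and theta_pos: "\<theta>1 > 0" "\<theta>2 > 0"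
    and arr_tail: "\<And>\<epsilon>. 0 < \<epsilon> \<Longrightarrow> \<epsilon> < \<mu> \<Longrightarrow>
        (\<integral>\<^sup>+ a. ennreal (exp (\<theta>1 * real a)) \<partial>measure_pmf (Arr \<epsilon>)) \<le> ennreal D1"
    and srv_tail: "(\<integral>\<^sup>+ s. ennreal (exp (\<theta>2 * real s)) \<partial>measure_pmf Srv) \<le> ennreal D2"
    and stat: "\<And>\<epsilon>. 0 < \<epsilon> \<Longrightarrow> \<epsilon> < \<mu> \<Longrightarrow> stationary_queue (Arr \<epsilon>) Srv (Pi \<epsilon>)"
    and moments: "\<And>\<epsilon> k. 0 < \<epsilon> \<Longrightarrow> \<epsilon> < \<mu> \<Longrightarrow>
        integrable (measure_pmf (Pi \<epsilon>)) (\<lambda>q. real q ^ k)"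
  shows "\<exists>C \<epsilon>0. 0 < \<epsilon>0 \<and> \<epsilon>0 < \<mu> \<and>
     (\<forall>\<epsilon>. 0 < \<epsilon> \<and> \<epsilon> \<le> \<epsilon>0 \<longrightarrow>
        wasserstein (distr (measure_pmf (Pi \<epsilon>)) borel (\<lambda>q. \<epsilon> * real q))
          (density lborel (exponential_density
             (2 / (measure_pmf.variance (Arr \<epsilon>) real + measure_pmf.variance Srv real))))
        \<le> ereal (C * \<epsilon> * ln (1 / \<epsilon>)))"
proof -
  define \<epsilon>0 where "\<epsilon>0 = min (\<mu> / 2) (exp (-1))"
  define CA where "CA = 27 * exp \<theta>1 / \<theta>1^3 * D1"
  define CS where "CS = 27 * exp \<theta>2 / \<theta>2^3 * D2"
  define C where "C = 1/2 + 1/\<theta>2 + 8 * D2 / \<theta>2^2 + 8 * CA * CS / c0"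
  have e0: "0 < \<epsilon>0" "\<epsilon>0 < \<mu>" using mu_pos by (auto simp: \<epsilon>0_def)
  have D2ge: "1 \<le> D2" by (rule exp_mom(3)[OF theta_pos(2) srv_tail])
  have D1ge: "1 \<le> D1" using e0 by (intro exp_mom(3)[OF theta_pos(1) arr_tail[of \<epsilon>0]]) auto
  have CA0: "0 \<le> CA" using D1ge theta_pos by (simp add: CA_def)
  have CS0: "0 \<le> CS" using D2ge theta_pos by (simp add: CS_def)
  have main: "wasserstein (distr (measure_pmf (Pi \<epsilon>)) borel (\<lambda>q. \<epsilon> * real q))
          (density lborel (exponential_density
             (2 / (measure_pmf.variance (Arr \<epsilon>) real + measure_pmf.variance Srv real))))
        \<le> ereal (C * \<epsilon> * ln (1 / \<epsilon>))" if eps: "0 < \<epsilon>" "\<epsilon> \<le> \<epsilon>0" for \<epsilon>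
  proof -
    have em: "\<epsilon> < \<mu>" using eps e0 by simp
    have e1: "\<epsilon> \<le> exp (-1)" using eps by (simp add: \<epsilon>0_def)
    define V where "V = measure_pmf.variance (Arr \<epsilon>) real + measure_pmf.variance Srv real"
    have Vc0: "c0 \<le> V" using var_lb[OF eps(1) em] by (simp add: V_def)
    have Vpos: "0 < V" using Vc0 c0_pos by simp
    define l where "l = 2 / V"
    have lpos: "0 < l" using Vpos by (simp add: l_def)
    have lV: "l * V = 2" using Vpos by (simp add: l_def)
    have lle: "l \<le> 2 / c0" unfolding l_def using Vc0 c0_pos by (intro divide_left_mono) auto
    define Lg where "Lg = ln (1 / \<epsilon>)"
    have Lg1: "1 \<le> Lg"
    proof -
      have "ln \<epsilon> \<le> ln (exp (-1))" using eps e1 by (subst ln_le_cancel_iff) auto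
      then show ?thesis using eps by (simp add: Lg_def ln_div)
    qed
    have eps1: "\<epsilon> \<le> 1" using e1 by (meson exp_le_one_iff le_minus_one_simps(1) order_trans)
    note cbA = cube_bound[OF theta_pos(1) arr_tail[OF eps(1) em]]
    note cbS = cube_bound[OF theta_pos(2) srv_tail]
    have stat': "bind_pmf (Pi \<epsilon>) (queue_step (Arr \<epsilon>) Srv) = Pi \<epsilon>"
      using stat[OF eps(1) em] by (simp add: stationary_queue_def)
    have mean': "(\<integral>a. real a \<partial>Arr \<epsilon>) = (\<integral>s. real s \<partial>Srv) - \<epsilon>"
      using arr_mean[OF eps(1) em] srv_mean by simp
    define K where "K = 2 / \<theta>2 * Lg"
    have K0: "0 \<le> K" using Lg1 theta_pos by (simp add: K_def)
    have expK: "exp (- \<theta>2 * K / 2) = \<epsilon>"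
    proof -
      have "- \<theta>2 * K / 2 = ln \<epsilon>" using theta_pos eps by (simp add: K_def Lg_def ln_div)
      then show ?thesis using eps by simp
    qed
    have tail: "(\<integral>s. (if K < real s then real s ^ 2 else 0) \<partial>Srv) \<le> (16 / \<theta>2^2) * \<epsilon> * D2"
      by (rule tail_bound[OF theta_pos(2) srv_tail, of K, unfolded expK])
    have bound_h: "\<bar>(\<integral>q. h (\<epsilon> * real q) \<partial>Pi \<epsilon>) - (\<integral>z. h z \<partial>density lborel (exponential_density l))\<bar>
                     \<le> C * \<epsilon> * Lg"
      if hL: "\<forall>x y. \<bar>h x - h y\<bar> \<le> \<bar>x - y\<bar>" for h
    proof -
      interpret M: main "Arr \<epsilon>" Srv "Pi \<epsilon>" \<epsilon> l h
      proof unfold_locales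
        show "integrable (measure_pmf (Arr \<epsilon>)) (\<lambda>a. (1 + real a) ^ 3)" by (rule cbA(1))
        show "integrable (measure_pmf Srv) (\<lambda>a. (1 + real a) ^ 3)" by (rule cbS(1))
        show "bind_pmf (Pi \<epsilon>) (queue_step (Arr \<epsilon>) Srv) = Pi \<epsilon>" by (rule stat')
        show "\<And>k. integrable (measure_pmf (Pi \<epsilon>)) (\<lambda>q. real q ^ k)" by (rule moments[OF eps(1) em])
        show "0 < \<epsilon>" by (rule eps(1))
        show "(\<integral>a. real a \<partial>Arr \<epsilon>) = (\<integral>s. real s \<partial>Srv) - \<epsilon>" by (rule mean')
        show "0 < l" by (rule lpos)
        show "\<And>x y. \<bar>h x - h y\<bar> \<le> \<bar>x - y\<bar>" using hL by blast
        show "l * (measure_pmf.variance (Arr \<epsilon>) real + measure_pmf.variance Srv real) = 2"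
          using lV by (simp add: V_def)
      qed
      have mb: "\<bar>(\<integral>q. h (\<epsilon> * real q) \<partial>Pi \<epsilon>) - M.c\<bar>
          \<le> \<epsilon>^2 / 2 + (K * \<epsilon> + (\<integral>s. (if K < real s then real s ^ 2 else 0) \<partial>Srv)) / 2 + 2 * l * \<epsilon> * M.EAS M.m3"
        by (rule M.main_bound[OF K0])
      have m3b: "M.EAS M.m3 \<le> 2 * (CA * CS)"
      proof -
        have "M.EAS M.m3 \<le> 2 * ((\<integral>a. (1 + real a)^3 \<partial>Arr \<epsilon>) * (\<integral>s. (1 + real s)^3 \<partial>Srv))"
          by (rule M.EAS_m3_le)
        also have "\<dots> \<le> 2 * (CA * CS)"
          using cbA(2) cbS(2) CS0 CA0
          by (intro mult_left_mono mult_mono) (auto simp: CA_def CS_def intro: order_trans[OF _ cbA(2)])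
        finally show ?thesis .
      qed
      have m3nn: "0 \<le> M.EAS M.m3"
      proof -
        have "M.EAS (\<lambda>a s. 0) \<le> M.EAS M.m3"
          by (rule M.EAS_mono[OF M.good_const M.good_m3]) (simp add: M.m3_def)
        then show ?thesis by simp
      qed
      have eL: "\<epsilon> \<le> \<epsilon> * Lg" using eps Lg1 by (simp add: mult_le_cancel_left1)
      have h1: "\<epsilon>^2 / 2 \<le> 1/2 * (\<epsilon> * Lg)"
      proof -
        have "\<epsilon>^2 \<le> \<epsilon>" using eps eps1 by (simp add: power2_eq_square mult_le_cancel_left1)
        then show ?thesis using eL by simp
      qed
      have h2: "K * \<epsilon> / 2 = 1 / \<theta>2 * (\<epsilon> * Lg)" using theta_pos by (simp add: K_def)
      have h3: "(\<integral>s. (if K < real s then real s ^ 2 else 0) \<partial>Srv) / 2 \<le> 8 * D2 / \<theta>2^2 * (\<epsilon> * Lg)"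
      proof -
        have "(\<integral>s. (if K < real s then real s ^ 2 else 0) \<partial>Srv) / 2 \<le> ((16 / \<theta>2^2) * \<epsilon> * D2) / 2"
          by (rule divide_right_mono[OF tail]) simp
        also have "\<dots> = 8 * D2 / \<theta>2^2 * \<epsilon>" by (simp add: field_simps)
        also have "\<dots> \<le> 8 * D2 / \<theta>2^2 * (\<epsilon> * Lg)"
          using eL D2ge by (intro mult_left_mono) auto
        finally show ?thesis .
      qed
      have h4: "2 * l * \<epsilon> * M.EAS M.m3 \<le> 8 * CA * CS / c0 * (\<epsilon> * Lg)"
      proof -
        have "2 * l * \<epsilon> * M.EAS M.m3 \<le> 2 * (2 / c0) * \<epsilon> * (2 * (CA * CS))"
          using lle m3b m3nn lpos eps CA0 CS0 c0_pos
          by (intro mult_mono) auto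
        also have "\<dots> = 8 * CA * CS / c0 * \<epsilon>" by simp
        also have "\<dots> \<le> 8 * CA * CS / c0 * (\<epsilon> * Lg)"
          using eL CA0 CS0 c0_pos by (intro mult_left_mono) auto
        finally show ?thesis .
      qed
      have Ceq: "1/2 * (\<epsilon> * Lg) + 1 / \<theta>2 * (\<epsilon> * Lg) + 8 * D2 / \<theta>2^2 * (\<epsilon> * Lg)
                          + 8 * CA * CS / c0 * (\<epsilon> * Lg) = C * \<epsilon> * Lg"
        by (simp add: C_def algebra_simps)
      have h2': "K * \<epsilon> / 2 \<le> 1 / \<theta>2 * (\<epsilon> * Lg)" using h2 by simp
      note mb2 = mb[unfolded M.c_def]
      have "\<bar>(\<integral>q. h (\<epsilon> * real q) \<partial>Pi \<epsilon>) - (\<integral>z. h z \<partial>density lborel (exponential_density l))\<bar>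
          \<le> \<epsilon>^2 / 2 + (K * \<epsilon> + (\<integral>s. (if K < real s then real s ^ 2 else 0) \<partial>Srv)) / 2 + 2 * l * \<epsilon> * M.EAS M.m3"
        by (rule mb2)
      also have "\<dots> = \<epsilon>^2 / 2 + K * \<epsilon> / 2 + (\<integral>s. (if K < real s then real s ^ 2 else 0) \<partial>Srv) / 2 + 2 * l * \<epsilon> * M.EAS M.m3"
        by (simp add: add_divide_distrib)
      also have "\<dots> \<le> 1/2 * (\<epsilon> * Lg) + 1 / \<theta>2 * (\<epsilon> * Lg) + 8 * D2 / \<theta>2^2 * (\<epsilon> * Lg)
                          + 8 * CA * CS / c0 * (\<epsilon> * Lg)"
        by (rule add_mono[OF add_mono[OF add_mono[OF h1 h2'] h3] h4])
      also note Ceq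
      finally show ?thesis .
    qed
    show ?thesis
      unfolding wasserstein_def
    proof (rule SUP_least)
      fix h assume hL: "h \<in> {h :: real \<Rightarrow> real. \<forall>x y. \<bar>h x - h y\<bar> \<le> \<bar>x - y\<bar>}"
      then have hL': "\<forall>x y. \<bar>h x - h y\<bar> \<le> \<bar>x - y\<bar>" by simp
      have hm: "h \<in> borel_measurable borel"
        by (rule borel_measurable_continuous_onI, rule lipschitz_on_continuous_on[of 1])
           (rule lipschitz_onI, auto simp: dist_real_def hL')
      have "(\<integral>x. h x \<partial>distr (measure_pmf (Pi \<epsilon>)) borel (\<lambda>q. \<epsilon> * real q)) = (\<integral>q. h (\<epsilon> * real q) \<partial>Pi \<epsilon>)"
        by (rule integral_distr) (auto simp: hm)
      then show "ereal \<bar>(\<integral>x. h x \<partial>distr (measure_pmf (Pi \<epsilon>)) borel (\<lambda>q. \<epsilon> * real q)) -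
            (\<integral>x. h x \<partial>density lborel (exponential_density
             (2 / (measure_pmf.variance (Arr \<epsilon>) real + measure_pmf.variance Srv real))))\<bar>
          \<le> ereal (C * \<epsilon> * ln (1 / \<epsilon>))"
        using bound_h[OF hL'] by (simp add: l_def V_def Lg_def)
    qed
  qed
  show ?thesis
    by (rule exI[of _ C], rule exI[of _ \<epsilon>0]) (use e0 main in auto)
qed


end
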